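(* Let $G$ be a multi-player game with arena $(\Pi,V,(V_i)_{i\in\Pi},E)$, payoff functions $f_i:Plays\to P_i$ and strict total orders $\prec_i$ on $P_i$. Assume that for every $i\in\Pi$: (a) for all plays $h\rho,h\rho'$ with $h$ a history, $f_i(\rho)\preceq_i f_i(\rho')$ implies $f_i(h\rho)\preceq_i f_i(h\rho')$; and (b) the two-player zero-sum game $G_i$ has uniform optimal strategies for both players. Then for every $v_0\in V$ there exists a finite-memory Nash equilibrium in $(G,v_0)$.
   Context: An arena is $(\Pi,V,(V_i)_{i\in\Pi},E)$ with $\Pi$ a finite set of players, $V$ a finite set of vertices, $E\subseteq V\times V$ such that every vertex has an outgoing edge, and $(V_i)_{i\in\Pi}$ a partition of $V$ ($V_i$ controlled by player $i$). Plays are infinite paths, histories nonempty finite paths; $Plays(v_0)$, $Hist_i(v_0)$ denote plays from $v_0$ and histories from $v_0$ ending in $V_i$. Each player $i$ has a payoff function $f_i:Plays\to P_i$ and a strict total order $\prec_i$ on $P_i$; $p\preceq_i p'$ means $p\prec_i p'$ or $p=p'$. A strategy of player $i$ from $v_0$ maps each $hv\in Hist_i(v_0)$ to a successor of $v$. It is positional if it depends only on the last vertex, uniform if it is a positional strategy given by a map $v\mapsto\sigma(v)$ on all of $V_i$ (hence usable from every initial vertex), and finite-memory if it can be computed by a finite-state machine reading the history (finitely many memory states, a memory update on each vertex, and the next vertex determined by the current memory state and current vertex). A profile is finite-memory if all its strategies are. The outcome $\langle(\sigma_i)_{i\in\Pi}\rangle_{v_0}$ is the unique play from $v_0$ consistent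 with all strategies. A profile is a Nash equilibrium in $(G,v_0)$ if no player $i$ has a strategy $\sigma'_i$ with $f_i(\langle(\sigma_j)_j\rangle_{v_0})\prec_i f_i(\langle\sigma'_i,\sigma_{-i}\rangle_{v_0})$. The game $G_i$ is the two-player zero-sum game on the same arena where player $i$ (controlling $V_i$, using $f_i$ and $\prec_i$) plays against player $-i$, the coalition of the others (controlling $V\setminus V_i$). Optimal strategies from $v$: a strategy $\tau$ of player $i$ and $\tau'$ of player $-i$ and an element ${val}_i(v)$ such that ${val}_i(v)\preceq_i f_i(\rho)$ for all plays from $v$ consistent with $\tau$ and $f_i(\rho)\preceq_i{val}_i(v)$ for all plays from $v$ consistent with $\tau'$. "$G_i$ has uniform optimal strategies for both players" means there are uniform strategies of player $i$ and of player $-i$ that are optimal from every initial vertex $v\in V$. *)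

theory Defs
  imports Main
begin

text \<open>Arena: players Pi, vertices V, edges E, and an owner map (vertex v belongs to V_i iff owner v = i).
  Plays are infinite paths (nat \<Rightarrow> 'v), histories are nonempty finite paths (lists).\<close>

definition arena :: "'p set \<Rightarrow> 'v set \<Rightarrow> ('v \<Rightarrow> 'p) \<Rightarrow> ('v \<times> 'v) set \<Rightarrow> bool" where
  "arena Pi V owner E \<longleftrightarrow> finite Pi \<and> finite V \<and> E \<subseteq> V \<times> V
     \<and> (\<forall>v\<in>V. owner v \<in> Pi) \<and> (\<forall>v\<in>V. \<exists>w. (v, w) \<in> E)"

definition is_play :: "'v set \<Rightarrow> ('v \<times> 'v) set \<Rightarrow> (nat \<Rightarrow> 'v) \<Rightarrow> bool" where
  "is_play V E \<rho> \<longleftrightarrow> (\<forall>n. \<rho> n \<in> V) \<and> (\<forall>n. (\<rho> n, \<rho> (Suc n)) \<in> E)"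

definition plays_from :: "'v set \<Rightarrow> ('v \<times> 'v) set \<Rightarrow> 'v \<Rightarrow> (nat \<Rightarrow> 'v) set" where
  "plays_from V E v = {\<rho>. is_play V E \<rho> \<and> \<rho> 0 = v}"

definition is_hist :: "'v set \<Rightarrow> ('v \<times> 'v) set \<Rightarrow> 'v list \<Rightarrow> bool" where
  "is_hist V E h \<longleftrightarrow> h \<noteq> [] \<and> set h \<subseteq> V \<and> (\<forall>k. Suc k < length h \<longrightarrow> (h ! k, h ! Suc k) \<in> E)"

definition hist_i :: "'v set \<Rightarrow> ('v \<times> 'v) set \<Rightarrow> ('v \<Rightarrow> 'p) \<Rightarrow> 'p \<Rightarrow> 'v \<Rightarrow> 'v list set" where
  "hist_i V E owner i v0 = {h. is_hist V E h \<and> hd h = v0 \<and> owner (last h) = i}"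

definition conc :: "'v list \<Rightarrow> (nat \<Rightarrow> 'v) \<Rightarrow> (nat \<Rightarrow> 'v)" where
  "conc h \<rho> = (\<lambda>n. if n < length h then h ! n else \<rho> (n - length h))"

definition strict_total_on :: "'o set \<Rightarrow> ('o \<times> 'o) set \<Rightarrow> bool" where
  "strict_total_on P r \<longleftrightarrow> r \<subseteq> P \<times> P \<and> (\<forall>x. (x, x) \<notin> r) \<and> trans r
     \<and> (\<forall>x\<in>P. \<forall>y\<in>P. x \<noteq> y \<longrightarrow> (x, y) \<in> r \<or> (y, x) \<in> r)"

definition le_of :: "('o \<times> 'o) set \<Rightarrow> 'o \<Rightarrow> 'o \<Rightarrow> bool" where
  "le_of r p p' \<longleftrightarrow> (p, p') \<in> r \<or> p = p'"

definition is_strategy :: "'v set \<Rightarrow> ('v \<times> 'v) set \<Rightarrow> ('v \<Rightarrow> 'p) \<Rightarrow> 'p \<Rightarrow> 'v \<Rightarrow> ('v list \<Rightarrow> 'v) \<Rightarrow> bool" where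
  "is_strategy V E owner i v0 \<sigma> \<longleftrightarrow> (\<forall>h\<in>hist_i V E owner i v0. (last h, \<sigma> h) \<in> E)"

text \<open>Finite-memory strategy: a Mealy machine with finitely many memory states M (encoded as naturals),
  initial state m0, update function upd (applied to each vertex read) and next-move function nxt
  (given current memory state and current vertex).\<close>
definition finite_memory :: "'v set \<Rightarrow> ('v \<times> 'v) set \<Rightarrow> ('v \<Rightarrow> 'p) \<Rightarrow> 'p \<Rightarrow> 'v \<Rightarrow> ('v list \<Rightarrow> 'v) \<Rightarrow> bool" where
  "finite_memory V E owner i v0 \<sigma> \<longleftrightarrow>
     (\<exists>(M :: nat set) m0 upd nxt. finite M \<and> m0 \<in> M \<and> (\<forall>m\<in>M. \<forall>v\<in>V. upd m v \<in> M)
        \<and> (\<forall>h\<in>hist_i V E owner i v0. \<sigma> h = nxt (foldl upd m0 (butlast h)) (last h)))"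

fun out_hist :: "('v \<Rightarrow> 'p) \<Rightarrow> ('p \<Rightarrow> 'v list \<Rightarrow> 'v) \<Rightarrow> 'v \<Rightarrow> nat \<Rightarrow> 'v list" where
  "out_hist owner \<sigma> v0 0 = [v0]"
| "out_hist owner \<sigma> v0 (Suc n) =
     (let h = out_hist owner \<sigma> v0 n in h @ [\<sigma> (owner (last h)) h])"

definition outcome :: "('v \<Rightarrow> 'p) \<Rightarrow> ('p \<Rightarrow> 'v list \<Rightarrow> 'v) \<Rightarrow> 'v \<Rightarrow> (nat \<Rightarrow> 'v)" where
  "outcome owner \<sigma> v0 = (\<lambda>n. last (out_hist owner \<sigma> v0 n))"

definition nash_eq :: "'p set \<Rightarrow> 'v set \<Rightarrow> ('v \<Rightarrow> 'p) \<Rightarrow> ('v \<times> 'v) set \<Rightarrow> ('p \<Rightarrow> (nat \<Rightarrow> 'v) \<Rightarrow> 'o)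
     \<Rightarrow> ('p \<Rightarrow> ('o \<times> 'o) set) \<Rightarrow> 'v \<Rightarrow> ('p \<Rightarrow> 'v list \<Rightarrow> 'v) \<Rightarrow> bool" where
  "nash_eq Pi V owner E f lt v0 \<sigma> \<longleftrightarrow>
     (\<forall>i\<in>Pi. is_strategy V E owner i v0 (\<sigma> i)) \<and>
     (\<forall>i\<in>Pi. \<forall>\<sigma>'. is_strategy V E owner i v0 \<sigma>' \<longrightarrow>
        (f i (outcome owner \<sigma> v0), f i (outcome owner (\<sigma>(i := \<sigma>')) v0)) \<notin> lt i)"

definition consistent_pos :: "('v \<Rightarrow> bool) \<Rightarrow> ('v \<Rightarrow> 'v) \<Rightarrow> (nat \<Rightarrow> 'v) \<Rightarrow> bool" where
  "consistent_pos owns \<tau> \<rho> \<longleftrightarrow> (\<forall>n. owns (\<rho> n) \<longrightarrow> \<rho> (Suc n) = \<tau> (\<rho> n))"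

definition uniform_optimal :: "'v set \<Rightarrow> ('v \<Rightarrow> 'p) \<Rightarrow> ('v \<times> 'v) set \<Rightarrow> ('p \<Rightarrow> (nat \<Rightarrow> 'v) \<Rightarrow> 'o)
     \<Rightarrow> ('p \<Rightarrow> 'o set) \<Rightarrow> ('p \<Rightarrow> ('o \<times> 'o) set) \<Rightarrow> 'p \<Rightarrow> bool" where
  "uniform_optimal V owner E f P lt i \<longleftrightarrow>
     (\<exists>\<tau> \<tau>' val.
        (\<forall>v\<in>V. owner v = i \<longrightarrow> (v, \<tau> v) \<in> E) \<and>
        (\<forall>v\<in>V. owner v \<noteq> i \<longrightarrow> (v, \<tau>' v) \<in> E) \<and>
        (\<forall>v\<in>V. val v \<in> P i
           \<and> (\<forall>\<rho>\<in>plays_from V E v. consistent_pos (\<lambda>w. owner w = i) \<tau> \<rho> \<longrightarrow> le_of (lt i) (val v) (f i \<rho>))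
           \<and> (\<forall>\<rho>\<in>plays_from V E v. consistent_pos (\<lambda>w. owner w \<noteq> i) \<tau>' \<rho> \<longrightarrow> le_of (lt i) (f i \<rho>) (val v))))"

end

theory Submission
  imports Defs
begin


lemma fm_generic:
  fixes S :: "'s set"
  assumes "finite S" "zi \<in> S" "\<forall>s\<in>S. \<forall>v\<in>V. u s v \<in> S"
    and "\<forall>h\<in>hist_i V E owner i v0. \<sigma> h = nx (foldl u zi (butlast h)) (last h)"
  shows "finite_memory V E owner i v0 \<sigma>"
proof -
  obtain enc :: "'s \<Rightarrow> nat" and n where enc: "enc ` S = {i. i < n}" "inj_on enc S"
    using finite_imp_inj_to_nat_seg[OF assms(1)] by blast
  define dec where "dec = inv_into S enc"
  have dec: "\<And>s. s \<in> S \<Longrightarrow> dec (enc s) = s" using enc(2) by (simp add: dec_def)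
  define upd where "upd m v = enc (u (dec m) v)" for m v
  define nxt where "nxt m v = nx (dec m) v" for m v
  have fo: "\<And>xs s. s \<in> S \<Longrightarrow> set xs \<subseteq> V \<Longrightarrow> foldl upd (enc s) xs = enc (foldl u s xs) \<and> foldl u s xs \<in> S"
  proof -
    fix xs s show "s \<in> S \<Longrightarrow> set xs \<subseteq> V \<Longrightarrow> foldl upd (enc s) xs = enc (foldl u s xs) \<and> foldl u s xs \<in> S"
    proof (induction xs arbitrary: s)
      case Nil then show ?case by simp
    next
      case (Cons x xs)
      have "u s x \<in> S" using Cons.prems assms(3) by auto
      moreover have "upd (enc s) x = enc (u s x)" using Cons.prems by (simp add: upd_def dec)
      ultimately show ?case using Cons by simp
    qed
  qed
  show ?thesis unfolding finite_memory_def
  proof (intro exI[of _ "enc ` S"] exI[of _ "enc zi"] exI[of _ upd] exI[of _ nxt] conjI ballI)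
    show "finite (enc ` S)" using assms(1) by simp
    show "enc zi \<in> enc ` S" using assms(2) by simp
  next
    fix m v assume "m \<in> enc ` S" "v \<in> V"
    then show "upd m v \<in> enc ` S" using assms(3) dec by (auto simp: upd_def)
  next
    fix h assume h: "h \<in> hist_i V E owner i v0"
    then have "set h \<subseteq> V" unfolding hist_i_def is_hist_def by blast
    then have "set (butlast h) \<subseteq> V" by (meson in_set_butlastD subset_iff)
    then have "foldl upd (enc zi) (butlast h) = enc (foldl u zi (butlast h)) \<and> foldl u zi (butlast h) \<in> S"
      using fo assms(2) by blast
    then show "\<sigma> h = nxt (foldl upd (enc zi) (butlast h)) (last h)"
      using assms(4) h dec by (simp add: nxt_def)
  qed
qed

lemma out_hist_map: "out_hist owner s v0 n = map (outcome owner s v0) [0..<Suc n]"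
proof (induction n)
  case 0 then show ?case by (simp add: outcome_def)
next
  case (Suc n)
  have "outcome owner s v0 (Suc n) = s (owner (last (out_hist owner s v0 n))) (out_hist owner s v0 n)"
    by (simp add: outcome_def Let_def)
  then show ?case using Suc by (simp add: Let_def)
qed

lemma last_map_upt: "last (map r [0..<Suc n]) = r n" by simp

lemma outcome_Suc: "outcome owner s v0 (Suc n) = s (owner (outcome owner s v0 n)) (map (outcome owner s v0) [0..<Suc n])"
proof -
  have "outcome owner s v0 (Suc n) = s (owner (last (out_hist owner s v0 n))) (out_hist owner s v0 n)"
    by (simp add: outcome_def Let_def)
  then show ?thesis by (simp only: out_hist_map last_map_upt)
qed

lemma outcome_0: "outcome owner s v0 0 = v0" by (simp add: outcome_def)

lemma hist_map: "(\<forall>k\<le>n. \<rho> k \<in> V) \<Longrightarrow> (\<forall>k<n. (\<rho> k, \<rho> (Suc k)) \<in> E) \<Longrightarrow> is_hist V E (map \<rho> [0..<Suc n])"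
  unfolding is_hist_def by (auto simp: nth_append less_Suc_eq_le simp del: upt_Suc)

lemma outcome_play:
  assumes ar: "arena Pi V owner E" and st: "\<forall>j\<in>Pi. is_strategy V E owner j v0 (s j)" and v0: "v0 \<in> V"
  shows "is_play V E (outcome owner s v0)"
proof -
  let ?r = "outcome owner s v0"
  have "(\<forall>k\<le>n. ?r k \<in> V) \<and> (\<forall>k<n. (?r k, ?r (Suc k)) \<in> E)" for n
  proof (induction n)
    case 0 then show ?case using v0 by (simp add: outcome_0)
  next
    case (Suc n)
    have h: "is_hist V E (map ?r [0..<Suc n])" using hist_map Suc by blast
    have own: "owner (?r n) \<in> Pi" using Suc ar by (simp add: arena_def)
    have "map ?r [0..<Suc n] \<in> hist_i V E owner (owner (?r n)) v0"
      using h by (simp add: hist_i_def outcome_0 hd_map last_map_upt del: upt_Suc)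
    then have "(last (map ?r [0..<Suc n]), s (owner (?r n)) (map ?r [0..<Suc n])) \<in> E"
      using st own unfolding is_strategy_def by blast
    then have e: "(?r n, ?r (Suc n)) \<in> E"
      by (simp only: outcome_Suc last_map_upt)
    then have "?r (Suc n) \<in> V" using ar by (auto simp: arena_def)
    then show ?case using Suc e by (auto simp: le_Suc_eq less_Suc_eq)
  qed
  then show ?thesis unfolding is_play_def by blast
qed


definition upd_st :: "('v \<Rightarrow> 'v) \<Rightarrow> ('v \<Rightarrow> 'p) \<Rightarrow> 'v option \<times> 'p option \<Rightarrow> 'v \<Rightarrow> 'v option \<times> 'p option" where
  "upd_st T own s v = (case s of (None, d) \<Rightarrow> (Some v, d)
     | (Some w, None) \<Rightarrow> (Some v, if v = T w then None else Some (own w))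
     | (Some w, Some j) \<Rightarrow> (Some v, Some j))"

definition st :: "('v \<Rightarrow> 'v) \<Rightarrow> ('v \<Rightarrow> 'p) \<Rightarrow> 'v list \<Rightarrow> 'v option \<times> 'p option" where
  "st T own h = foldl (upd_st T own) (None, None) h"

definition act :: "('p \<Rightarrow> 'v \<Rightarrow> 'v) \<Rightarrow> ('p \<Rightarrow> 'v \<Rightarrow> 'v) \<Rightarrow> 'p \<Rightarrow> 'p option \<Rightarrow> 'v \<Rightarrow> 'v" where
  "act tau tau' j d v = (case d of None \<Rightarrow> tau j v | Some k \<Rightarrow> if k = j then tau j v else tau' k v)"

definition prof :: "('v \<Rightarrow> 'v) \<Rightarrow> ('p \<Rightarrow> 'v \<Rightarrow> 'v) \<Rightarrow> ('p \<Rightarrow> 'v \<Rightarrow> 'v) \<Rightarrow> ('v \<Rightarrow> 'p) \<Rightarrow> 'p \<Rightarrow> 'v list \<Rightarrow> 'v" where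
  "prof T tau tau' own j h = act tau tau' j (snd (st T own h)) (last h)"

lemma upd_fst: "fst (upd_st T own s v) = Some v"
  by (cases s) (simp add: upd_st_def split: option.split)

lemma upd_snd: "fst s = Some w \<Longrightarrow> snd (upd_st T own s v) = (case snd s of None \<Rightarrow> if v = T w then None else Some (own w) | Some j \<Rightarrow> Some j)"
  by (cases s) (simp add: upd_st_def split: option.split)

lemma st_app: "st T own (xs @ [x]) = upd_st T own (st T own xs) x"
  by (simp add: st_def)

lemma st_snoc_fst: "fst (st T own (xs @ [x])) = Some x"
  by (simp only: st_app upd_fst)

lemma st_single: "st T own [x] = (Some x, None)"
  by (simp add: st_def upd_st_def)

lemma st_snoc: assumes "xs \<noteq> []"
  shows "snd (st T own (xs @ [x])) = (case snd (st T own xs) of None \<Rightarrow> if x = T (last xs) then None else Some (own (last xs)) | Some j \<Rightarrow> Some j)"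
proof -
  have "xs = butlast xs @ [last xs]" using assms by simp
  then have f: "fst (st T own xs) = Some (last xs)" by (metis st_snoc_fst)
  show ?thesis unfolding st_app by (rule upd_snd[OF f])
qed

lemma upd_inv:
  assumes "own x \<in> Pi" "\<forall>j. snd s = Some j \<longrightarrow> j \<in> Pi" "\<forall>w. fst s = Some w \<longrightarrow> own w \<in> Pi"
  shows "(\<forall>j. snd (upd_st T own s x) = Some j \<longrightarrow> j \<in> Pi) \<and> (\<forall>w. fst (upd_st T own s x) = Some w \<longrightarrow> own w \<in> Pi)"
proof (cases s)
  case (Pair a d)
  show ?thesis
  proof (cases a)
    case None then show ?thesis using Pair assms by (simp add: upd_st_def)
  next
    case (Some w)
    then have w: "own w \<in> Pi" using Pair assms(3) by simp
    show ?thesis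
    proof (cases d)
      case None then show ?thesis using Pair Some w assms(1) by (simp add: upd_st_def)
    next
      case (Some j) then show ?thesis using Pair \<open>a = Some w\<close> assms by (simp add: upd_st_def)
    qed
  qed
qed

lemma st_inv_gen: "(\<forall>v\<in>set xs. own v \<in> Pi) \<Longrightarrow> (\<forall>j. snd s = Some j \<longrightarrow> j \<in> Pi) \<Longrightarrow> (\<forall>w. fst s = Some w \<longrightarrow> own w \<in> Pi)
   \<Longrightarrow> (\<forall>j. snd (foldl (upd_st T own) s xs) = Some j \<longrightarrow> j \<in> Pi)"
proof (induction xs arbitrary: s)
  case Nil then show ?case by simp
next
  case (Cons x xs)
  have x: "own x \<in> Pi" using Cons.prems(1) by simp
  have xs: "\<forall>v\<in>set xs. own v \<in> Pi" using Cons.prems(1) by simp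
  note u = upd_inv[OF x Cons.prems(2) Cons.prems(3), of T]
  have "\<forall>j. snd (foldl (upd_st T own) (upd_st T own s x) xs) = Some j \<longrightarrow> j \<in> Pi"
    using Cons.IH[OF xs] u by blast
  then show ?case by simp
qed

lemma st_inv: "(\<forall>v\<in>set xs. own v \<in> Pi) \<Longrightarrow> snd (st T own xs) = Some j \<Longrightarrow> j \<in> Pi"
  using st_inv_gen[of xs own Pi "(None, None)" T] by (simp add: st_def)

lemma le_of_trans: "trans r \<Longrightarrow> le_of r a b \<Longrightarrow> le_of r b c \<Longrightarrow> le_of r a c"
  unfolding le_of_def by (meson transD)



theorem corollary1:
  fixes Pi :: "'p set" and V :: "'v set" and owner :: "'v \<Rightarrow> 'p" and E :: "('v \<times> 'v) set"
    and f :: "'p \<Rightarrow> (nat \<Rightarrow> 'v) \<Rightarrow> 'o" and P :: "'p \<Rightarrow> 'o set" and lt :: "'p \<Rightarrow> ('o \<times> 'o) set"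
    and v0 :: 'v
  assumes ar: "arena Pi V owner E"
    and pay: "\<And>i \<rho>. i \<in> Pi \<Longrightarrow> is_play V E \<rho> \<Longrightarrow> f i \<rho> \<in> P i"
    and ord: "\<And>i. i \<in> Pi \<Longrightarrow> strict_total_on (P i) (lt i)"
    and a: "\<And>i h \<rho> \<rho>'. i \<in> Pi \<Longrightarrow> is_hist V E h \<Longrightarrow>
              is_play V E (conc h \<rho>) \<Longrightarrow> is_play V E (conc h \<rho>') \<Longrightarrow>
              le_of (lt i) (f i \<rho>) (f i \<rho>') \<Longrightarrow> le_of (lt i) (f i (conc h \<rho>)) (f i (conc h \<rho>'))"
    and b: "\<And>i. i \<in> Pi \<Longrightarrow> uniform_optimal V owner E f P lt i"
    and v0: "v0 \<in> V"
  shows "\<exists>\<sigma>. (\<forall>i\<in>Pi. finite_memory V E owner i v0 (\<sigma> i)) \<and> nash_eq Pi V owner E f lt v0 \<sigma>"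
  proof -
  define Q where "Q i \<tau> \<tau>' val \<longleftrightarrow> (\<forall>v\<in>V. owner v = i \<longrightarrow> (v, \<tau> v) \<in> E) \<and>
        (\<forall>v\<in>V. owner v \<noteq> i \<longrightarrow> (v, \<tau>' v) \<in> E) \<and>
        (\<forall>v\<in>V. val v \<in> P i
           \<and> (\<forall>\<rho>\<in>plays_from V E v. consistent_pos (\<lambda>w. owner w = i) \<tau> \<rho> \<longrightarrow> le_of (lt i) (val v) (f i \<rho>))
           \<and> (\<forall>\<rho>\<in>plays_from V E v. consistent_pos (\<lambda>w. owner w \<noteq> i) \<tau>' \<rho> \<longrightarrow> le_of (lt i) (f i \<rho>) (val v)))" for i \<tau> \<tau>' val
  have "\<forall>i. \<exists>t. i \<in> Pi \<longrightarrow> Q i (fst t) (fst (snd t)) (snd (snd t))"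
  proof
    fix i show "\<exists>t. i \<in> Pi \<longrightarrow> Q i (fst t) (fst (snd t)) (snd (snd t))"
    proof (cases "i \<in> Pi")
      case True
      have "uniform_optimal V owner E f P lt i" using b True by blast
      then have "\<exists>x y z. Q i x y z" unfolding uniform_optimal_def Q_def .
      then obtain x y z where "Q i x y z" by blast
      then show ?thesis by (intro exI[of _ "(x, y, z)"]) simp
    qed simp
  qed
  then have "\<exists>F. \<forall>i. i \<in> Pi \<longrightarrow> Q i (fst (F i)) (fst (snd (F i))) (snd (snd (F i)))" by (rule choice)
  then obtain F where F: "\<forall>i. i \<in> Pi \<longrightarrow> Q i (fst (F i)) (fst (snd (F i))) (snd (snd (F i)))" ..
  define tau where "tau i = fst (F i)" for i
  define tau' where "tau' i = fst (snd (F i))" for i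
  define val where "val i = snd (snd (F i))" for i
  have TT: "\<And>i. i \<in> Pi \<Longrightarrow> ((\<forall>v\<in>V. owner v = i \<longrightarrow> (v, tau i v) \<in> E) \<and>
        (\<forall>v\<in>V. owner v \<noteq> i \<longrightarrow> (v, tau' i v) \<in> E) \<and>
        (\<forall>v\<in>V. val i v \<in> P i
           \<and> (\<forall>\<rho>\<in>plays_from V E v. consistent_pos (\<lambda>w. owner w = i) (tau i) \<rho> \<longrightarrow> le_of (lt i) (val i v) (f i \<rho>))
           \<and> (\<forall>\<rho>\<in>plays_from V E v. consistent_pos (\<lambda>w. owner w \<noteq> i) (tau' i) \<rho> \<longrightarrow> le_of (lt i) (f i \<rho>) (val i v))))"
  proof -
    fix i assume "i \<in> Pi"
    then have "Q i (tau i) (tau' i) (val i)" using F by (simp add: tau_def tau'_def val_def)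
    then show "(\<forall>v\<in>V. owner v = i \<longrightarrow> (v, tau i v) \<in> E) \<and>
        (\<forall>v\<in>V. owner v \<noteq> i \<longrightarrow> (v, tau' i v) \<in> E) \<and>
        (\<forall>v\<in>V. val i v \<in> P i
           \<and> (\<forall>\<rho>\<in>plays_from V E v. consistent_pos (\<lambda>w. owner w = i) (tau i) \<rho> \<longrightarrow> le_of (lt i) (val i v) (f i \<rho>))
           \<and> (\<forall>\<rho>\<in>plays_from V E v. consistent_pos (\<lambda>w. owner w \<noteq> i) (tau' i) \<rho> \<longrightarrow> le_of (lt i) (f i \<rho>) (val i v)))" unfolding Q_def .
  qed
  have TT1: "\<And>i v. i \<in> Pi \<Longrightarrow> v \<in> V \<Longrightarrow> owner v = i \<Longrightarrow> (v, tau i v) \<in> E" using TT by blast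
  have TT2: "\<And>i v. i \<in> Pi \<Longrightarrow> v \<in> V \<Longrightarrow> owner v \<noteq> i \<Longrightarrow> (v, tau' i v) \<in> E" using TT by blast
  have TT3: "\<And>i v \<rho>. i \<in> Pi \<Longrightarrow> v \<in> V \<Longrightarrow> \<rho> \<in> plays_from V E v \<Longrightarrow> consistent_pos (\<lambda>w. owner w = i) (tau i) \<rho> \<Longrightarrow> le_of (lt i) (val i v) (f i \<rho>)"
    using TT by blast
  have TT4: "\<And>i v \<rho>. i \<in> Pi \<Longrightarrow> v \<in> V \<Longrightarrow> \<rho> \<in> plays_from V E v \<Longrightarrow> consistent_pos (\<lambda>w. owner w \<noteq> i) (tau' i) \<rho> \<Longrightarrow> le_of (lt i) (f i \<rho>) (val i v)"
    using TT by blast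
  define T where "T = (\<lambda>v. tau (owner v) v)"
  define \<sigma> where "\<sigma> = prof T tau tau' owner"
  have ownPi: "\<And>v. v \<in> V \<Longrightarrow> owner v \<in> Pi" using ar by (simp add: arena_def)
  have EV: "\<And>x y. (x, y) \<in> E \<Longrightarrow> y \<in> V" using ar by (auto simp: arena_def)
  have FM: "\<forall>i\<in>Pi. finite_memory V E owner i v0 (\<sigma> i)"
  proof
    fix i assume i: "i \<in> Pi"
    let ?S = "(insert None (Some ` V)) \<times> (insert None (Some ` Pi))"
    show "finite_memory V E owner i v0 (\<sigma> i)"
    proof (rule fm_generic[where S = ?S and zi = "(None, None)" and u = "upd_st T owner"
          and nx = "\<lambda>s v. act tau tau' i (snd (upd_st T owner s v)) v"])
      show "finite ?S" using ar by (simp add: arena_def)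
      show "(None, None) \<in> ?S" by simp
      show "\<forall>s\<in>?S. \<forall>v\<in>V. upd_st T owner s v \<in> ?S"
        using ownPi by (auto simp: upd_st_def split: option.splits)
      show "\<forall>h\<in>hist_i V E owner i v0. \<sigma> i h = act tau tau' i (snd (upd_st T owner (foldl (upd_st T owner) (None, None) (butlast h)) (last h))) (last h)"
      proof
        fix h assume "h \<in> hist_i V E owner i v0"
        then have "h \<noteq> []" by (simp add: hist_i_def is_hist_def)
        then have "foldl (upd_st T owner) (None, None) h = upd_st T owner (foldl (upd_st T owner) (None, None) (butlast h)) (last h)"
          by (metis append_butlast_last_id foldl_Cons foldl_Nil foldl_append)
        then show "\<sigma> i h = act tau tau' i (snd (upd_st T owner (foldl (upd_st T owner) (None, None) (butlast h)) (last h))) (last h)"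
          by (simp add: \<sigma>_def prof_def st_def)
      qed
    qed
  qed
  have STR: "\<forall>j\<in>Pi. is_strategy V E owner j v0 (\<sigma> j)"
  proof (intro ballI, unfold is_strategy_def, intro ballI)
    fix j h assume j: "j \<in> Pi" and h: "h \<in> hist_i V E owner j v0"
    then have lv: "last h \<in> V" and oj: "owner (last h) = j"
      by (auto simp: hist_i_def is_hist_def)
    have sv: "\<forall>v\<in>set h. owner v \<in> Pi" using h ownPi by (auto simp: hist_i_def is_hist_def)
    note si = st_inv[OF sv, of T]
    show "(last h, \<sigma> j h) \<in> E"
    proof (cases "snd (st T owner h)")
      case None then show ?thesis using TT1[OF j lv oj] by (simp add: \<sigma>_def prof_def act_def)
    next
      case (Some k)
      then have kP: "k \<in> Pi" using si by blast
      show ?thesis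
      proof (cases "k = j")
        case True then show ?thesis using TT1[OF j lv oj] Some by (simp add: \<sigma>_def prof_def act_def)
      next
        case False then show ?thesis using TT2[OF kP lv] oj Some by (simp add: \<sigma>_def prof_def act_def)
      qed
    qed
  qed
  have NE: "\<forall>i\<in>Pi. \<forall>\<sigma>'. is_strategy V E owner i v0 \<sigma>' \<longrightarrow>
        (f i (outcome owner \<sigma> v0), f i (outcome owner (\<sigma>(i := \<sigma>')) v0)) \<notin> lt i"
  proof (intro ballI allI impI)
    fix i \<sigma>' assume i: "i \<in> Pi" and s': "is_strategy V E owner i v0 \<sigma>'"
    define \<rho> where "\<rho> = outcome owner \<sigma> v0"
    define \<pi> where "\<pi> = outcome owner (\<sigma>(i := \<sigma>')) v0"
    have STR2: "\<forall>j\<in>Pi. is_strategy V E owner j v0 ((\<sigma>(i := \<sigma>')) j)" using STR s' by simp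
    have pr: "is_play V E \<rho>" unfolding \<rho>_def by (rule outcome_play[OF ar STR v0])
    have pp: "is_play V E \<pi>" unfolding \<pi>_def by (rule outcome_play[OF ar STR2 v0])
    have rV: "\<And>n. \<rho> n \<in> V" using pr by (simp add: is_play_def)
    have so: "strict_total_on (P i) (lt i)" using ord[OF i] .
    then have irr: "\<And>x. (x, x) \<notin> lt i" and tr: "trans (lt i)" by (auto simp: strict_total_on_def)
    have step: "\<rho> (Suc n) = T (\<rho> n)" if "snd (st T owner (map \<rho> [0..<Suc n])) = None" for n
    proof -
      have "\<rho> (Suc n) = \<sigma> (owner (\<rho> n)) (map \<rho> [0..<Suc n])"
        unfolding \<rho>_def by (rule outcome_Suc)
      also have "\<dots> = T (\<rho> n)" using that
        by (simp only: \<sigma>_def prof_def act_def last_map_upt T_def) simp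
      finally show ?thesis .
    qed
    have R: "snd (st T owner (map \<rho> [0..<Suc n])) = None" for n
    proof (induction n)
      case 0 then show ?case by (simp add: st_single)
    next
      case (Suc n)
      have "map \<rho> [0..<Suc (Suc n)] = map \<rho> [0..<Suc n] @ [\<rho> (Suc n)]" by simp
      moreover have "map \<rho> [0..<Suc n] \<noteq> []" by simp
      ultimately show ?case using st_snoc[of "map \<rho> [0..<Suc n]" T owner "\<rho> (Suc n)"] Suc step[OF Suc]
        by (simp del: upt_Suc add: last_map_upt)
    qed
    have RT: "\<And>n. \<rho> (Suc n) = T (\<rho> n)" using step R by blast
    show "(f i (outcome owner \<sigma> v0), f i (outcome owner (\<sigma>(i := \<sigma>')) v0)) \<notin> lt i"
    proof
      assume contra: "(f i (outcome owner \<sigma> v0), f i (outcome owner (\<sigma>(i := \<sigma>')) v0)) \<in> lt i"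
      then have contra: "(f i \<rho>, f i \<pi>) \<in> lt i" by (simp add: \<rho>_def \<pi>_def)
      show False
      proof (cases "\<forall>n. \<pi> n = \<rho> n")
        case True
        then have "\<pi> = \<rho>" by auto
        then show False using contra irr by simp
      next
        case False
        define k where "k = (LEAST n. \<pi> n \<noteq> \<rho> n)"
        have k: "\<pi> k \<noteq> \<rho> k" using False unfolding k_def by (metis (mono_tags, lifting) LeastI)
        have bef: "\<And>n. n < k \<Longrightarrow> \<pi> n = \<rho> n" unfolding k_def using not_less_Least by blast
        have "\<pi> 0 = \<rho> 0" by (simp add: \<pi>_def \<rho>_def outcome_0)
        then have "k \<noteq> 0" using k by metis
        then obtain m where km: "k = Suc m" by (cases k) auto
        have agree: "\<And>n. n \<le> m \<Longrightarrow> \<pi> n = \<rho> n" using bef km by simp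
        have mapeq: "map \<pi> [0..<Suc m] = map \<rho> [0..<Suc m]"
          using agree by (simp del: upt_Suc)
        have \<pi>Suc: "\<pi> (Suc n) = (\<sigma>(i := \<sigma>')) (owner (\<pi> n)) (map \<pi> [0..<Suc n])" for n
          unfolding \<pi>_def by (rule outcome_Suc)
        have \<rho>Suc: "\<rho> (Suc n) = \<sigma> (owner (\<rho> n)) (map \<rho> [0..<Suc n])" for n
          unfolding \<rho>_def by (rule outcome_Suc)
        have ownm: "owner (\<rho> m) = i"
        proof (rule ccontr)
          assume "owner (\<rho> m) \<noteq> i"
          then have "\<pi> (Suc m) = \<rho> (Suc m)" using \<pi>Suc[of m] \<rho>Suc[of m] mapeq agree[of m] by (simp del: upt_Suc)
          then show False using k km by simp
        qed
        have D: "snd (st T owner (map \<pi> [0..<Suc (Suc m + n)])) = Some i" for n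
        proof (induction n)
          case 0
          have e: "map \<pi> [0..<Suc (Suc m + 0)] = map \<pi> [0..<Suc m] @ [\<pi> (Suc m)]" by simp
          have "\<pi> (Suc m) \<noteq> T (\<rho> m)" using k km RT by simp
          then show ?case unfolding e mapeq
            using st_snoc[of "map \<rho> [0..<Suc m]" T owner "\<pi> (Suc m)"] R[of m] ownm
            by (simp del: upt_Suc add: last_map_upt)
        next
          case (Suc n)
          have e: "map \<pi> [0..<Suc (Suc m + Suc n)] = map \<pi> [0..<Suc (Suc m + n)] @ [\<pi> (Suc (Suc m + n))]" by simp
          show ?case unfolding e
            using st_snoc[of "map \<pi> [0..<Suc (Suc m + n)]" T owner "\<pi> (Suc (Suc m + n))"] Suc
            by (simp del: upt_Suc)
        qed
        define \<pi>t where "\<pi>t = (\<lambda>n. \<pi> (n + m))"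
        define \<rho>t where "\<rho>t = (\<lambda>n. \<rho> (n + m))"
        define v where "v = \<rho> m"
        have vV: "v \<in> V" using rV by (simp add: v_def)
        have c1: "consistent_pos (\<lambda>w. owner w \<noteq> i) (tau' i) \<pi>t"
          unfolding consistent_pos_def
        proof (intro allI impI)
          fix n assume o: "owner (\<pi>t n) \<noteq> i"
          show "\<pi>t (Suc n) = tau' i (\<pi>t n)"
          proof (cases n)
            case 0 then show ?thesis using o agree[of m] ownm by (simp add: \<pi>t_def)
          next
            case (Suc n')
            have d: "snd (st T owner (map \<pi> [0..<Suc (Suc n' + m)])) = Some i"
              using D[of n'] by (simp add: add.commute del: upt_Suc)
            have "\<pi> (Suc (Suc n' + m)) = \<sigma> (owner (\<pi> (Suc n' + m))) (map \<pi> [0..<Suc (Suc n' + m)])"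
              using \<pi>Suc[of "Suc n' + m"] o Suc by (simp add: \<pi>t_def del: upt_Suc)
            also have "\<dots> = tau' i (\<pi> (Suc n' + m))"
              using d o Suc by (simp only: \<sigma>_def prof_def act_def last_map_upt) (simp add: \<pi>t_def)
            finally show ?thesis using Suc by (simp add: \<pi>t_def)
          qed
        qed
        have c2: "consistent_pos (\<lambda>w. owner w = i) (tau i) \<rho>t"
          unfolding consistent_pos_def \<rho>t_def using RT by (simp add: T_def)
        have p1: "\<pi>t \<in> plays_from V E v"
          using pp agree[of m] by (simp add: plays_from_def is_play_def \<pi>t_def v_def)
        have p2: "\<rho>t \<in> plays_from V E v"
          using pr by (simp add: plays_from_def is_play_def \<rho>t_def v_def)
        have l1: "le_of (lt i) (f i \<pi>t) (val i v)" by (rule TT4[OF i vV p1 c1])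
        have l2: "le_of (lt i) (val i v) (f i \<rho>t)" by (rule TT3[OF i vV p2 c2])
        have lt: "le_of (lt i) (f i \<pi>t) (f i \<rho>t)" using le_of_trans[OF tr l1 l2] .
        have fin: "le_of (lt i) (f i \<pi>) (f i \<rho>)"
        proof (cases m)
          case 0
          then have "\<pi>t = \<pi>" "\<rho>t = \<rho>" by (auto simp: \<pi>t_def \<rho>t_def)
          then show ?thesis using lt by simp
        next
          case (Suc m')
          define h where "h = map \<rho> [0..<m]"
          have hh: "is_hist V E h" unfolding h_def Suc
            by (rule hist_map) (use pr in \<open>auto simp: is_play_def\<close>)
          have lh: "length h = m" by (simp add: h_def)
          have e1: "conc h \<rho>t = \<rho>"
            by (rule ext) (simp add: conc_def lh \<rho>t_def h_def)
          have e2: "conc h \<pi>t = \<pi>"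
            by (rule ext) (simp add: conc_def lh \<pi>t_def h_def agree)
          show ?thesis using a[OF i hh, of \<pi>t \<rho>t] e1 e2 pp pr lt by simp
        qed
        show False
        proof (cases "f i \<pi> = f i \<rho>")
          case True then show False using contra irr by simp
        next
          case False
          then have "(f i \<pi>, f i \<rho>) \<in> lt i" using fin unfolding le_of_def by simp
          then have "(f i \<rho>, f i \<rho>) \<in> lt i" using contra tr by (meson transD)
          then show False using irr by simp
        qed
      qed
    qed
  qed
  show ?thesis using FM STR NE unfolding nash_eq_def by blast
qed

end
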